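(* Let the system $x^+=f(x,u)$ (as in the context) be flat with flat output $y$ and parameterization $x=F_x(y_{[-R_1,R_2-1]})$, $u=F_u(y_{[-R_1,R_2]})$. Then the submatrices $\partial_{y_{[R_2-1]}}F_x$ (the Jacobian of $F_x$ with respect to the variables $y^j_{[r_{2,j}-1]}$, $j=1,\dots,m$) and $\partial_{y_{[R_2]}}F_u$ (the Jacobian of $F_u$ with respect to the variables $y^j_{[r_{2,j}]}$, $j=1,\dots,m$) have the same (generic) rank.
   Context: Consider a nonlinear time-invariant discrete-time system $x^{i,+}=f^i(x,u)$, $i=1,\dots,n$, with $x\in\mathbb{R}^n$, $u\in\mathbb{R}^m$, smooth $f$, $\operatorname{rank}(\partial_u f)=m$, and $\operatorname{rank}(\partial_{(x,u)}f)=n$. Let $g(x,u)$ be $m$ smooth functions such that $(x,u)\mapsto(f(x,u),g(x,u))$ is a local diffeomorphism, and $\zeta=g(x,u)$. Notation: $w_{[\alpha]}$ is the $\alpha$-th forward shift, $w_{[-\alpha]}$ the $\alpha$-th backward shift; for a multi-index $R=(r_1,\dots,r_m)$ and $y=(y^1,\dots,y^m)$, $y_{[R]}$ denotes $(y^1_{[r_1]},\dots,y^m_{[r_m]})$ and $y_{[-S_1,S_2]}$ denotes all $y^j_{[i]}$ with $-s_{1,j}\le i\le s_{2,j}$. Flatness: the system is flat around an equilibrium if there exist an $m$-tuple $y=\varphi(\zeta_{[-Q_1,-1]},x,u,u_{[1,Q_2]})$ (flat output) and smooth maps $x=F_x(y_{[-R_1,R_2-1]})$, $u=F_u(y_{[-R_1,R_2]})$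 (the uniquely determined parameterization) establishing locally a one-to-one correspondence between system trajectories and arbitrary sequences $y(k)\in\mathbb{R}^m$; in particular the identity $\delta(F_x)=f(F_x,F_u)$ holds, where $\delta$ is the forward shift operator acting on functions of $y$ and its shifts (replacing each $y_{[i]}$ by $y_{[i+1]}$). *)

theory Defs
  imports "HOL-Analysis.Analysis"
begin

fun Ck_on :: "nat \<Rightarrow> ('a::euclidean_space \<Rightarrow> 'b::real_normed_vector) \<Rightarrow> 'a set \<Rightarrow> bool" where
  "Ck_on 0 h U = continuous_on U h"
| "Ck_on (Suc k) h U =
     (\<exists>h'. (\<forall>p\<in>U. (h has_derivative h' p) (at p)) \<and> (\<forall>v. Ck_on k (\<lambda>p. h' p v) U))"

definition smooth_on :: "('a::euclidean_space \<Rightarrow> 'b::real_normed_vector) \<Rightarrow> 'a set \<Rightarrow> bool" where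
  "smooth_on h U \<longleftrightarrow> (\<forall>k. Ck_on k h U)"

definition local_diffeo :: "('a::euclidean_space \<Rightarrow> 'b::euclidean_space) \<Rightarrow> bool" where
  "local_diffeo h \<longleftrightarrow> (\<forall>p. \<exists>S T. open S \<and> p \<in> S \<and> open T \<and> bij_betw h S T \<and>
      smooth_on h S \<and> smooth_on (inv_into S h) T)"

text \<open>The partial Jacobian d_u f corresponds to the restriction of the derivative to
  directions (0,v); ranks of linear maps are dimensions of their ranges.\<close>

definition standing_assumptions ::
  "((real^'n) \<times> (real^'m) \<Rightarrow> real^'n) \<Rightarrow> ((real^'n) \<times> (real^'m) \<Rightarrow> real^'m) \<Rightarrow> bool" where
  "standing_assumptions f g \<longleftrightarrow>
     smooth_on f UNIV \<and>
     (\<forall>p f'. (f has_derivative f') (at p) \<longrightarrow> dim (range (\<lambda>v. f' (0, v))) = CARD('m)) \<and>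
     (\<forall>p f'. (f has_derivative f') (at p) \<longrightarrow> dim (range f') = CARD('n)) \<and>
     smooth_on g UNIV \<and>
     local_diffeo (\<lambda>p. (f p, g p))"

text \<open>A sequence Y :: int => real^'m represents y: y^j_[i] = Y i $ j.\<close>

definition shiftseq :: "int \<Rightarrow> (int \<Rightarrow> 'a) \<Rightarrow> (int \<Rightarrow> 'a)" where
  "shiftseq k Y = (\<lambda>i. Y (i + k))"

definition fwd_shift :: "((int \<Rightarrow> 'a) \<Rightarrow> 'b) \<Rightarrow> ((int \<Rightarrow> 'a) \<Rightarrow> 'b)" where
  "fwd_shift F = (\<lambda>Y. F (shiftseq 1 Y))"

definition seq_upd :: "(int \<Rightarrow> real^'m) \<Rightarrow> int \<Rightarrow> 'm \<Rightarrow> real \<Rightarrow> (int \<Rightarrow> real^'m)" where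
  "seq_upd Y i j t = Y(i := (\<chi> k. if k = j then t else Y i $ k))"

definition seq_partial ::
  "((int \<Rightarrow> real^'m) \<Rightarrow> 'b::real_normed_vector) \<Rightarrow> int \<Rightarrow> 'm \<Rightarrow> (int \<Rightarrow> real^'m) \<Rightarrow> 'b" where
  "seq_partial F i j Y = vector_derivative (\<lambda>t. F (seq_upd Y i j t)) (at (Y i $ j))"

definition depends_only_on :: "((int \<Rightarrow> 'a^'m) \<Rightarrow> 'b) \<Rightarrow> (int \<Rightarrow> 'm \<Rightarrow> bool) \<Rightarrow> bool" where
  "depends_only_on F W \<longleftrightarrow>
     (\<forall>Y Y'. (\<forall>i j. W i j \<longrightarrow> Y i $ j = Y' i $ j) \<longrightarrow> F Y = F Y')"

fun seq_Ck_on :: "nat \<Rightarrow> ((int \<Rightarrow> real^'m) \<Rightarrow> 'b::real_normed_vector) \<Rightarrow> (int \<Rightarrow> real^'m) set \<Rightarrow> bool" where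
  "seq_Ck_on 0 F D = continuous_on D F"
| "seq_Ck_on (Suc k) F D =
     (continuous_on D F \<and>
      (\<forall>Y\<in>D. \<forall>i j. (\<lambda>t. F (seq_upd Y i j t)) differentiable (at (Y i $ j))) \<and>
      (\<forall>i j. seq_Ck_on k (seq_partial F i j) D))"

definition seq_smooth_on :: "((int \<Rightarrow> real^'m) \<Rightarrow> 'b::real_normed_vector) \<Rightarrow> (int \<Rightarrow> real^'m) set \<Rightarrow> bool" where
  "seq_smooth_on F D \<longleftrightarrow> (\<forall>k. seq_Ck_on k F D)"

text \<open>uniform neighbourhood of the constant sequence y0 (shift invariant)\<close>
definition seq_ball :: "'a::metric_space \<Rightarrow> real \<Rightarrow> (int \<Rightarrow> 'a) set" where
  "seq_ball y0 e = {Y. \<forall>i. dist (Y i) y0 < e}"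

definition trajectory ::
  "((real^'n) \<times> (real^'m) \<Rightarrow> real^'n) \<Rightarrow> (int \<Rightarrow> real^'n) \<Rightarrow> (int \<Rightarrow> real^'m) \<Rightarrow> bool" where
  "trajectory f x u \<longleftrightarrow> (\<forall>k. x (k + 1) = f (x k, u k))"

text \<open>flat output along a trajectory at time k:
  y(k) = phi(zeta_[-Q1,-1], x, u, u_[1,Q2]) evaluated at time k, zeta = g(x,u)\<close>
definition flat_output_seq ::
  "((real^'n) \<times> (real^'m) \<Rightarrow> real^'m) \<Rightarrow>
   ((int \<Rightarrow> real^'m) \<Rightarrow> (int \<Rightarrow> real^'n) \<Rightarrow> (int \<Rightarrow> real^'m) \<Rightarrow> real^'m) \<Rightarrow>
   (int \<Rightarrow> real^'n) \<Rightarrow> (int \<Rightarrow> real^'m) \<Rightarrow> (int \<Rightarrow> real^'m)" where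
  "flat_output_seq g \<phi> x u =
     (\<lambda>k. \<phi> (shiftseq k (\<lambda>i. g (x i, u i))) (shiftseq k x) (shiftseq k u))"

definition eq_flat_output ::
  "((real^'n) \<times> (real^'m) \<Rightarrow> real^'m) \<Rightarrow>
   ((int \<Rightarrow> real^'m) \<Rightarrow> (int \<Rightarrow> real^'n) \<Rightarrow> (int \<Rightarrow> real^'m) \<Rightarrow> real^'m) \<Rightarrow>
   real^'n \<Rightarrow> real^'m \<Rightarrow> real^'m" where
  "eq_flat_output g \<phi> x0 u0 = \<phi> (\<lambda>_. g (x0, u0)) (\<lambda>_. x0) (\<lambda>_. u0)"

definition flat_around ::
  "((real^'n) \<times> (real^'m) \<Rightarrow> real^'n) \<Rightarrow> ((real^'n) \<times> (real^'m) \<Rightarrow> real^'m) \<Rightarrow>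
   real^'n \<Rightarrow> real^'m \<Rightarrow>
   ((int \<Rightarrow> real^'m) \<Rightarrow> (int \<Rightarrow> real^'n) \<Rightarrow> (int \<Rightarrow> real^'m) \<Rightarrow> real^'m) \<Rightarrow>
   ('m \<Rightarrow> nat) \<Rightarrow> ('m \<Rightarrow> nat) \<Rightarrow>
   ((int \<Rightarrow> real^'m) \<Rightarrow> real^'n) \<Rightarrow> ((int \<Rightarrow> real^'m) \<Rightarrow> real^'m) \<Rightarrow>
   ('m \<Rightarrow> nat) \<Rightarrow> ('m \<Rightarrow> nat) \<Rightarrow> bool" where
  "flat_around f g x0 u0 \<phi> Q1 Q2 Fx Fu R1 R2 \<longleftrightarrow>
     f (x0, u0) = x0 \<and>
     (\<forall>Z X U Z' X' U'.
        (\<forall>i j. - int (Q1 j) \<le> i \<and> i \<le> -1 \<longrightarrow> Z i $ j = Z' i $ j) \<and> X 0 = X' 0 \<and>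
        (\<forall>i j. 0 \<le> i \<and> i \<le> int (Q2 j) \<longrightarrow> U i $ j = U' i $ j)
        \<longrightarrow> \<phi> Z X U = \<phi> Z' X' U') \<and>
     depends_only_on Fx (\<lambda>i j. - int (R1 j) \<le> i \<and> i \<le> int (R2 j) - 1) \<and>
     depends_only_on Fu (\<lambda>i j. - int (R1 j) \<le> i \<and> i \<le> int (R2 j)) \<and>
     (\<exists>\<epsilon>>0. \<exists>\<delta>>0.
        seq_smooth_on Fx (seq_ball (eq_flat_output g \<phi> x0 u0) \<epsilon>) \<and>
        seq_smooth_on Fu (seq_ball (eq_flat_output g \<phi> x0 u0) \<epsilon>) \<and>
        (\<forall>Y\<in>seq_ball (eq_flat_output g \<phi> x0 u0) \<epsilon>.
           trajectory f (\<lambda>k. Fx (shiftseq k Y)) (\<lambda>k. Fu (shiftseq k Y)) \<and>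
           flat_output_seq g \<phi> (\<lambda>k. Fx (shiftseq k Y)) (\<lambda>k. Fu (shiftseq k Y)) = Y) \<and>
        (\<forall>x u. trajectory f x u \<and> (\<forall>k. dist (x k, u k) (x0, u0) < \<delta>) \<longrightarrow>
           flat_output_seq g \<phi> x u \<in> seq_ball (eq_flat_output g \<phi> x0 u0) \<epsilon> \<and>
           (\<forall>k. x k = Fx (shiftseq k (flat_output_seq g \<phi> x u)) \<and>
                u k = Fu (shiftseq k (flat_output_seq g \<phi> x u)))))"

definition seq_jacobian ::
  "((int \<Rightarrow> real^'m) \<Rightarrow> real^'k) \<Rightarrow> ('m \<Rightarrow> int) \<Rightarrow> (int \<Rightarrow> real^'m) \<Rightarrow> real^'m^'k" where
  "seq_jacobian F idx Y = (\<chi> a b. seq_partial F (idx b) b Y $ a)"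

text \<open>generic rank (around the constant sequence y0) of a matrix-valued function of y:
  the maximal rank attained on arbitrarily small neighbourhoods of y0\<close>
definition generic_rank :: "((int \<Rightarrow> real^'m) \<Rightarrow> real^'c^'r) \<Rightarrow> real^'m \<Rightarrow> nat" where
  "generic_rank M y0 = (LEAST r. \<exists>\<epsilon>>0. \<forall>Y\<in>seq_ball y0 \<epsilon>. rank (M Y) \<le> r)"

end

theory Submission
  imports Defs
begin

lemma rank_mul_inj:
  fixes A :: "real^'m^'n" and B :: "real^'p^'m"
  assumes "inj ((*v) A)"
  shows "rank (A ** B) = rank B"
proof -
  have "rank (A ** B) = dim ((*v) A ` range ((*v) B))"
    by (auto simp: rank_dim_range image_comp o_def matrix_vector_mul_assoc)
  also have "\<dots> = dim (range ((*v) B))"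
    by (rule dim_image_eq) (use assms in \<open>auto simp: inj_on_def\<close>)
  finally show ?thesis by (simp add: rank_dim_range)
qed

lemma shift_ball: "Y \<in> seq_ball c e \<Longrightarrow> shiftseq k Y \<in> seq_ball c e"
  by (simp add: seq_ball_def shiftseq_def)

lemma col_lemma:
  fixes f :: "(real^'n) \<times> (real^'m) \<Rightarrow> real^'n"
    and Fx :: "(int \<Rightarrow> real^'m) \<Rightarrow> real^'n"
    and Fu :: "(int \<Rightarrow> real^'m) \<Rightarrow> real^'m"
  assumes L: "\<forall>Y\<in>seq_ball c e. Fx (shiftseq 1 Y) = f (Fx Y, Fu Y)"
    and dep: "depends_only_on Fx (\<lambda>i j. - int (R1 j) \<le> i \<and> i \<le> int (R2 j) - 1)"
    and Yin: "Y \<in> seq_ball c e"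
    and i: "i = int (R2 j)"
    and diff: "(\<lambda>t. Fu (seq_upd Y i j t)) differentiable (at (Y i $ j))"
    and fder: "(f has_derivative f') (at (Fx Y, Fu Y))"
  shows "seq_partial Fx (i - 1) j (shiftseq 1 Y) = f' (0, seq_partial Fu i j Y)"
proof -
  define t0 where "t0 = Y i $ j"
  define \<gamma> where "\<gamma> = (\<lambda>t. seq_upd Y i j t)"
  have h1: "shiftseq 1 (\<gamma> t) = seq_upd (shiftseq 1 Y) (i-1) j t" for t
    by (auto simp: shiftseq_def seq_upd_def \<gamma>_def fun_eq_iff)
  have h2: "(shiftseq 1 Y) (i-1) $ j = t0"
    by (simp add: shiftseq_def t0_def)
  have lhs: "seq_partial Fx (i - 1) j (shiftseq 1 Y) = vector_derivative (\<lambda>t. Fx (shiftseq 1 (\<gamma> t))) (at t0)"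
    unfolding seq_partial_def h1 h2 ..
  have h3: "\<gamma> t0 = Y"
    by (auto simp: \<gamma>_def seq_upd_def t0_def fun_eq_iff vec_eq_iff)
  have h4: "Fx (\<gamma> t) = Fx Y" for t
  proof -
    have "\<forall>i' j'. (- int (R1 j') \<le> i' \<and> i' \<le> int (R2 j') - 1) \<longrightarrow> \<gamma> t i' $ j' = Y i' $ j'"
    proof (intro allI impI)
      fix i' j' assume a: "- int (R1 j') \<le> i' \<and> i' \<le> int (R2 j') - 1"
      show "\<gamma> t i' $ j' = Y i' $ j'"
      proof (cases "i' = i")
        case True
        then have "j' \<noteq> j" using a i by auto
        then show ?thesis using True by (simp add: \<gamma>_def seq_upd_def)
      qed (simp add: \<gamma>_def seq_upd_def)
    qed
    then show ?thesis using dep unfolding depends_only_on_def by blast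
  qed
  have yi: "dist (Y i) c < e" using Yin by (simp add: seq_ball_def)
  have h5: "\<gamma> t \<in> seq_ball c e" if "dist t t0 < e - dist (Y i) c" for t
  proof -
    have "dist (\<gamma> t i) (Y i) \<le> (\<Sum>k\<in>UNIV. \<bar>(\<gamma> t i - Y i) $ k\<bar>)"
      unfolding dist_norm by (rule norm_le_l1_cart)
    also have "\<dots> = (\<Sum>k\<in>UNIV. if k = j then \<bar>t - t0\<bar> else 0)"
      by (rule sum.cong) (auto simp: \<gamma>_def seq_upd_def t0_def)
    also have "\<dots> = dist t t0" by (simp add: dist_real_def)
    finally have "dist (\<gamma> t i) (Y i) \<le> dist t t0" .
    then have "dist (\<gamma> t i) c < e" using that dist_triangle[of "\<gamma> t i" c "Y i"] by linarith
    then show ?thesis using Yin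
      by (auto simp: seq_ball_def \<gamma>_def seq_upd_def)
  qed
  define D where "D = vector_derivative (\<lambda>t. Fu (\<gamma> t)) (at t0)"
  have h6: "((\<lambda>t. Fu (\<gamma> t)) has_vector_derivative D) (at t0)"
    using diff unfolding D_def \<gamma>_def t0_def by (simp add: vector_derivative_works)
  have h7: "((\<lambda>t. (Fx Y, Fu (\<gamma> t))) has_vector_derivative (0, D)) (at t0)"
    by (intro has_vector_derivative_Pair h6 has_vector_derivative_const)
  have fder': "(f has_derivative f') (at ((\<lambda>t. (Fx Y, Fu (\<gamma> t))) t0))"
    using fder h3 by simp
  have "((f \<circ> (\<lambda>t. (Fx Y, Fu (\<gamma> t)))) has_derivative (f' \<circ> (\<lambda>x. x *\<^sub>R (0, D)))) (at t0)"
    by (rule diff_chain_at[OF h7[unfolded has_vector_derivative_def] fder'])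
  moreover have "f' \<circ> (\<lambda>x. x *\<^sub>R (0, D)) = (\<lambda>x. x *\<^sub>R f' (0, D))"
    using linear_scale[OF has_derivative_linear[OF fder], of _ "(0, D)"] by (auto simp: fun_eq_iff)
  ultimately have h8: "((\<lambda>t. f (Fx Y, Fu (\<gamma> t))) has_vector_derivative f' (0, D)) (at t0)"
    by (simp add: has_vector_derivative_def o_def)
  have h9: "((\<lambda>t. Fx (shiftseq 1 (\<gamma> t))) has_vector_derivative f' (0, D)) (at t0)"
  proof (rule has_vector_derivative_transform_within[OF h8, of "e - dist (Y i) c"])
    show "0 < e - dist (Y i) c" using yi by simp
    fix t assume "dist t t0 < e - dist (Y i) c"
    then have "\<gamma> t \<in> seq_ball c e" by (rule h5)
    then show "f (Fx Y, Fu (\<gamma> t)) = Fx (shiftseq 1 (\<gamma> t))"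
      using L h4[of t] by simp
  qed simp
  have "seq_partial Fu i j Y = D"
    unfolding seq_partial_def D_def \<gamma>_def t0_def ..
  then show ?thesis using lhs vector_derivative_at[OF h9] by simp
qed

theorem proposition1:
  fixes f :: "(real^'n) \<times> (real^'m) \<Rightarrow> real^'n"
    and g :: "(real^'n) \<times> (real^'m) \<Rightarrow> real^'m"
    and x0 :: "real^'n" and u0 :: "real^'m"
    and \<phi> :: "(int \<Rightarrow> real^'m) \<Rightarrow> (int \<Rightarrow> real^'n) \<Rightarrow> (int \<Rightarrow> real^'m) \<Rightarrow> real^'m"
    and Q1 Q2 R1 R2 :: "'m \<Rightarrow> nat"
    and Fx :: "(int \<Rightarrow> real^'m) \<Rightarrow> real^'n"
    and Fu :: "(int \<Rightarrow> real^'m) \<Rightarrow> real^'m"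
  assumes "standing_assumptions f g"
    and "flat_around f g x0 u0 \<phi> Q1 Q2 Fx Fu R1 R2"
  shows "generic_rank (seq_jacobian Fx (\<lambda>j. int (R2 j) - 1)) (eq_flat_output g \<phi> x0 u0)
       = generic_rank (seq_jacobian Fu (\<lambda>j. int (R2 j))) (eq_flat_output g \<phi> x0 u0)"
proof -
  define c where "c = eq_flat_output g \<phi> x0 u0"
  define Mx where "Mx = seq_jacobian Fx (\<lambda>j. int (R2 j) - 1)"
  define Mu where "Mu = seq_jacobian Fu (\<lambda>j. int (R2 j))"
  have dep: "depends_only_on Fx (\<lambda>i j. - int (R1 j) \<le> i \<and> i \<le> int (R2 j) - 1)"
    using assms(2) unfolding flat_around_def by blast
  obtain \<epsilon> where ep: "\<epsilon> > 0" and smu: "seq_smooth_on Fu (seq_ball c \<epsilon>)"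
    and traj: "\<forall>Y\<in>seq_ball c \<epsilon>. trajectory f (\<lambda>k. Fx (shiftseq k Y)) (\<lambda>k. Fu (shiftseq k Y))"
    using assms(2) unfolding flat_around_def c_def by blast
  have L: "\<forall>Y\<in>seq_ball c \<epsilon>. Fx (shiftseq 1 Y) = f (Fx Y, Fu Y)"
  proof
    fix Y assume "Y \<in> seq_ball c \<epsilon>"
    then have "Fx (shiftseq (0+1) Y) = f (Fx (shiftseq 0 Y), Fu (shiftseq 0 Y))"
      using traj unfolding trajectory_def by blast
    moreover have "shiftseq 0 Y = Y" by (simp add: shiftseq_def)
    ultimately show "Fx (shiftseq 1 Y) = f (Fx Y, Fu Y)" by simp
  qed
  have diff: "\<And>Y i j. Y \<in> seq_ball c \<epsilon> \<Longrightarrow> (\<lambda>t. Fu (seq_upd Y i j t)) differentiable (at (Y i $ j))"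
    using smu unfolding seq_smooth_on_def by (metis seq_Ck_on.simps(2))
  have "Ck_on (Suc 0) f UNIV"
    using assms(1) unfolding standing_assumptions_def smooth_on_def by blast
  then obtain h' where h': "\<And>p. (f has_derivative h' p) (at p)" by auto
  have rk: "dim (range (\<lambda>v. h' p (0, v))) = CARD('m)" for p
    using assms(1) h' unfolding standing_assumptions_def by blast
  have key: "rank (Mx (shiftseq 1 Y)) = rank (Mu Y)" if Y: "Y \<in> seq_ball c \<epsilon>" for Y
  proof -
    define p where "p = (Fx Y, Fu Y)"
    define Lp where "Lp = (\<lambda>v::real^'m. h' p (0, v))"
    have lin: "linear (h' p)" using h' has_derivative_linear by blast
    have linL: "linear Lp"
      unfolding Lp_def by (rule linear_compose[OF _ lin, unfolded o_def]) (auto intro: linearI)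
    define A where "A = matrix Lp"
    have Av: "A *v v = Lp v" for v
      unfolding A_def using linL by (simp add: matrix_works)
    have "rank A = CARD('m)"
      using rk[of p] by (simp add: rank_dim_range Av Lp_def)
    then have injA: "inj ((*v) A)" by (simp add: full_rank_injective)
    have cols: "column b (Mx (shiftseq 1 Y)) = column b (A ** Mu Y)" for b
    proof -
      have "column b (A ** Mu Y) = A *v column b (Mu Y)"
        by (metis matrix_vector_mult_basis matrix_vector_mul_assoc)
      also have "column b (Mu Y) = seq_partial Fu (int (R2 b)) b Y"
        by (simp add: column_def Mu_def seq_jacobian_def vec_eq_iff)
      also have "A *v seq_partial Fu (int (R2 b)) b Y = seq_partial Fx (int (R2 b) - 1) b (shiftseq 1 Y)"
        unfolding Av Lp_def p_def
        by (rule col_lemma[OF L dep Y refl diff[OF Y] h', symmetric])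
      also have "\<dots> = column b (Mx (shiftseq 1 Y))"
        by (simp add: column_def Mx_def seq_jacobian_def vec_eq_iff)
      finally show ?thesis by simp
    qed
    have "Mx (shiftseq 1 Y) = A ** Mu Y"
      using cols by (simp add: column_def vec_eq_iff)
    then show ?thesis using rank_mul_inj[OF injA] by simp
  qed
  have ballmono: "e' \<le> e \<Longrightarrow> seq_ball c e' \<subseteq> seq_ball c e" for e e'
    by (auto simp: seq_ball_def intro: less_le_trans)
  have P: "(\<exists>e>0. \<forall>Y\<in>seq_ball c e. rank (Mx Y) \<le> r) \<longleftrightarrow> (\<exists>e>0. \<forall>Y\<in>seq_ball c e. rank (Mu Y) \<le> r)" for r
  proof
    assume "\<exists>e>0. \<forall>Y\<in>seq_ball c e. rank (Mx Y) \<le> r"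
    then obtain e where e: "e > 0" "\<forall>Y\<in>seq_ball c e. rank (Mx Y) \<le> r" by blast
    have "\<forall>Y\<in>seq_ball c (min e \<epsilon>). rank (Mu Y) \<le> r"
    proof
      fix Y assume Y: "Y \<in> seq_ball c (min e \<epsilon>)"
      then have "shiftseq 1 Y \<in> seq_ball c (min e \<epsilon>)" by (rule shift_ball)
      then have "rank (Mx (shiftseq 1 Y)) \<le> r" using e ballmono[of "min e \<epsilon>" e] by auto
      moreover have "Y \<in> seq_ball c \<epsilon>" using Y ballmono[of "min e \<epsilon>" \<epsilon>] by auto
      ultimately show "rank (Mu Y) \<le> r" using key by simp
    qed
    then show "\<exists>e>0. \<forall>Y\<in>seq_ball c e. rank (Mu Y) \<le> r" using e ep by (intro exI[of _ "min e \<epsilon>"]) auto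
  next
    assume "\<exists>e>0. \<forall>Y\<in>seq_ball c e. rank (Mu Y) \<le> r"
    then obtain e where e: "e > 0" "\<forall>Y\<in>seq_ball c e. rank (Mu Y) \<le> r" by blast
    have "\<forall>Y\<in>seq_ball c (min e \<epsilon>). rank (Mx Y) \<le> r"
    proof
      fix Y assume Y: "Y \<in> seq_ball c (min e \<epsilon>)"
      define Y' where "Y' = shiftseq (-1) Y"
      have Y'in: "Y' \<in> seq_ball c (min e \<epsilon>)" unfolding Y'_def using Y by (rule shift_ball)
      have YY: "shiftseq 1 Y' = Y" by (simp add: Y'_def shiftseq_def)
      have "rank (Mu Y') \<le> r" using Y'in e ballmono[of "min e \<epsilon>" e] by auto
      moreover have "Y' \<in> seq_ball c \<epsilon>" using Y'in ballmono[of "min e \<epsilon>" \<epsilon>] by auto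
      ultimately show "rank (Mx Y) \<le> r" using key[of Y'] YY by simp
    qed
    then show "\<exists>e>0. \<forall>Y\<in>seq_ball c e. rank (Mx Y) \<le> r" using e ep by (intro exI[of _ "min e \<epsilon>"]) auto
  qed
  show ?thesis
    unfolding generic_rank_def c_def[symmetric] Mx_def[symmetric] Mu_def[symmetric] P ..
qed

end
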